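(* Let $\mathcal H=(V,E)$ be a hypergraph with splitting functions and let $R\subseteq V$ satisfy $0<\mathrm{vol}(R)\le\mathrm{vol}(\bar R)$. Let $\varepsilon_0=\mathrm{vol}(R)/\mathrm{vol}(\bar R)$, let $\varepsilon\in[\varepsilon_0,\varepsilon_0+1)$, and set $\mu=\varepsilon-\varepsilon_0\ge0$. Let $S^*$ be a minimizer of $\mathrm{HLC}$ over all subsets of $V$; this is the set returned by Algorithm 1. Then: 1. For every $T\subseteq R$ with $\mathrm{vol}(T)>0$, we have $\mathrm{cond}(S^* )\le\mathrm{cond}(T)$. 2. Let $T\subseteq V$ satisfy $0<\mathrm{vol}(T)\le\mathrm{vol}(\bar T)$, and suppose that for some $\gamma\in(\mu,1)$, $$\frac{\mathrm{vol}(T\cap R)}{\mathrm{vol}(T)}\ge\frac{\mathrm{vol}(R)}{\mathrm{vol}(V)}+\gamma\,\frac{\mathrm{vol}(\bar R)}{\mathrm{vol}(V)}.$$ Then $\mathrm{cond}(S^* )\le\frac{1}{\gamma-\mu}\mathrm{cond}(T)$. In particular, when $\varepsilon=\varepsilon_0$ we get $\mathrm{cond}(S^* )\le\frac1\gamma\mathrm{cond}(T)$.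
   Context: A hypergraph $\mathcal H=(V,E)$ has a finite node set $V$, and each hyperedge $e\in E$ is a subset of $V$. Each hyperedge $e$ carries a splitting function $w_e:2^e\to\mathbb R_{\ge0}$ satisfying $w_e(A)=w_e(e\setminus A)$ for all $A\subseteq e$ and $w_e(\emptyset)=w_e(e)=0$. For $S\subseteq V$, $\mathrm{cut}_{\mathcal H}(S)=\sum_{e\in E}w_e(e\cap S)$. The degree of $v$ is $d_v=\sum_{e\ni v}w_e(\{v\})$, and $\mathrm{vol}(S)=\sum_{v\in S}d_v$. Write $\bar S=V\setminus S$. Hypergraph conductance is $\mathrm{cond}(S)=\mathrm{cut}_{\mathcal H}(S)/\min\{\mathrm{vol}(S),\mathrm{vol}(\bar S)\}$. Define $\Omega_{R,\varepsilon}(S)=\mathrm{vol}(S\cap R)-\varepsilon\,\mathrm{vol}(S\cap\bar R)$. Set $\mathrm{HLC}(S)=\mathrm{cut}_{\mathcal H}(S)/\Omega_{R,\varepsilon}(S)$ if $\Omega_{R,\varepsilon}(S)>0$, and $\mathrm{HLC}(S)=\infty$ otherwise. *)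

theory Defs
  imports "HOL-Analysis.Analysis" "HOL-Library.Extended_Real"
begin

definition hypergraph :: "'a set \<Rightarrow> 'a set set \<Rightarrow> ('a set \<Rightarrow> 'a set \<Rightarrow> real) \<Rightarrow> bool" where
  "hypergraph V E w \<longleftrightarrow> finite V \<and> finite E \<and> (\<forall>e\<in>E. e \<subseteq> V) \<and>
     (\<forall>e\<in>E. \<forall>A. A \<subseteq> e \<longrightarrow> w e A \<ge> 0 \<and> w e A = w e (e - A)) \<and>
     (\<forall>e\<in>E. w e {} = 0 \<and> w e e = 0)"

definition hcut :: "'a set set \<Rightarrow> ('a set \<Rightarrow> 'a set \<Rightarrow> real) \<Rightarrow> 'a set \<Rightarrow> real" where
  "hcut E w S = (\<Sum>e\<in>E. w e (e \<inter> S))"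

definition hdeg :: "'a set set \<Rightarrow> ('a set \<Rightarrow> 'a set \<Rightarrow> real) \<Rightarrow> 'a \<Rightarrow> real" where
  "hdeg E w v = (\<Sum>e\<in>{e\<in>E. v \<in> e}. w e {v})"

definition hvol :: "'a set set \<Rightarrow> ('a set \<Rightarrow> 'a set \<Rightarrow> real) \<Rightarrow> 'a set \<Rightarrow> real" where
  "hvol E w S = (\<Sum>v\<in>S. hdeg E w v)"

definition hcond :: "'a set \<Rightarrow> 'a set set \<Rightarrow> ('a set \<Rightarrow> 'a set \<Rightarrow> real) \<Rightarrow> 'a set \<Rightarrow> real" where
  "hcond V E w S = hcut E w S / min (hvol E w S) (hvol E w (V - S))"

definition Omega :: "'a set \<Rightarrow> 'a set set \<Rightarrow> ('a set \<Rightarrow> 'a set \<Rightarrow> real) \<Rightarrow> 'a set \<Rightarrow> real \<Rightarrow> 'a set \<Rightarrow> real" where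
  "Omega V E w R \<epsilon> S = hvol E w (S \<inter> R) - \<epsilon> * hvol E w (S \<inter> (V - R))"

definition HLC :: "'a set \<Rightarrow> 'a set set \<Rightarrow> ('a set \<Rightarrow> 'a set \<Rightarrow> real) \<Rightarrow> 'a set \<Rightarrow> real \<Rightarrow> 'a set \<Rightarrow> ereal" where
  "HLC V E w R \<epsilon> S = (if Omega V E w R \<epsilon> S > 0
      then ereal (hcut E w S / Omega V E w R \<epsilon> S) else \<infinity>)"

end

theory Submission
  imports Defs
begin

lemma w_nonneg: assumes H: "hypergraph V E w" and "e \<in> E" "A \<subseteq> e" shows "0 \<le> w e A"
  using H assms(2,3) unfolding hypergraph_def by blast

lemma hdeg_nonneg: assumes H: "hypergraph V E w" shows "0 \<le> hdeg E w v"
  unfolding hdeg_def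
proof (rule sum_nonneg)
  fix e assume "e \<in> {e \<in> E. v \<in> e}"
  thus "0 \<le> w e {v}" using w_nonneg[OF H, of e "{v}"] by blast
qed

lemma hvol_nonneg: assumes H: "hypergraph V E w" shows "0 \<le> hvol E w A"
  unfolding hvol_def using hdeg_nonneg[OF H] by (simp add: sum_nonneg)

lemma hcut_nonneg: assumes H: "hypergraph V E w" shows "0 \<le> hcut E w A"
  unfolding hcut_def
proof (rule sum_nonneg)
  fix e assume "e \<in> E"
  thus "0 \<le> w e (e \<inter> A)" using w_nonneg[OF H, of e "e \<inter> A"] by blast
qed

lemma hvol_split: assumes "finite A" shows "hvol E w A = hvol E w (A \<inter> B) + hvol E w (A - B)"
  unfolding hvol_def using assms by (metis sum.Int_Diff)

lemma hvol_mono: assumes H: "hypergraph V E w" and "A \<subseteq> B" "finite B"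
  shows "hvol E w A \<le> hvol E w B"
  unfolding hvol_def using assms hdeg_nonneg[OF H] by (intro sum_mono2) auto

lemma Omega_le_min:
  assumes H: "hypergraph V E w" and RV: "R \<subseteq> V" and SV: "S \<subseteq> V"
    and Rpos: "0 < hvol E w R" and Rle: "hvol E w R \<le> hvol E w (V - R)"
    and eps_lo: "hvol E w R / hvol E w (V - R) \<le> \<epsilon>"
  shows "Omega V E w R \<epsilon> S \<le> min (hvol E w S) (hvol E w (V - S))"
proof -
  have fV: "finite V" using H by (simp add: hypergraph_def)
  define a where "a = hvol E w (S \<inter> R)"
  define b where "b = hvol E w (S - R)"
  define c where "c = hvol E w ((V - S) \<inter> R)"
  define d where "d = hvol E w ((V - S) - R)"
  have nn: "0 \<le> a" "0 \<le> b" "0 \<le> c" "0 \<le> d" unfolding a_def b_def c_def d_def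
    using hvol_nonneg[OF H] by auto
  have fS: "finite S" using fV SV finite_subset by blast
  have vS: "hvol E w S = a + b" unfolding a_def b_def using hvol_split[OF fS] by blast
  have vSc: "hvol E w (V - S) = c + d" unfolding c_def d_def using hvol_split fV by blast
  have "hvol E w R = hvol E w (R \<inter> S) + hvol E w (R - S)"
    using hvol_split fV RV finite_subset by blast
  moreover have "R \<inter> S = S \<inter> R" "R - S = (V - S) \<inter> R" using RV by auto
  ultimately have vR: "hvol E w R = a + c" unfolding a_def c_def by simp
  have "hvol E w (V - R) = hvol E w ((V - R) \<inter> S) + hvol E w ((V - R) - S)"
    using hvol_split fV by blast
  moreover have "(V - R) \<inter> S = S - R" "(V - R) - S = (V - S) - R" using SV by auto
  ultimately have vRc: "hvol E w (V - R) = b + d" unfolding b_def d_def by simp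
  have Om: "Omega V E w R \<epsilon> S = a - \<epsilon> * b"
  proof -
    have "S \<inter> (V - R) = S - R" using SV by blast
    thus ?thesis unfolding Omega_def a_def b_def by simp
  qed
  have bd: "0 < b + d" using Rpos Rle vR vRc by linarith
  have e0: "(a + c) / (b + d) \<le> \<epsilon>" using eps_lo vR vRc by simp
  hence "a + c \<le> \<epsilon> * (b + d)" using bd by (simp add: divide_le_eq)
  have epos: "0 \<le> \<epsilon>" using e0 bd nn by (meson divide_nonneg_pos add_nonneg_nonneg order_trans)
  have "(a + c) * b \<le> \<epsilon> * (b + d) * b" using \<open>a + c \<le> \<epsilon> * (b + d)\<close> nn by (simp add: mult_right_mono)
  have "a \<le> b + d" using vR vRc Rle nn by linarith
  hence "a * d \<le> (b + d) * d" using nn(4) by (rule mult_right_mono)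
  have "(a - \<epsilon> * b) * (b + d) \<le> (c + d) * (b + d)"
  proof -
    have "(a - \<epsilon> * b) * (b + d) = a * b + a * d - \<epsilon> * (b + d) * b" by (simp add: algebra_simps)
    also have "\<dots> \<le> a * b + a * d - (a + c) * b" using \<open>(a + c) * b \<le> \<epsilon> * (b + d) * b\<close> by linarith
    also have "\<dots> = a * d - c * b" by (simp add: algebra_simps)
    also have "\<dots> \<le> (b + d) * d" using \<open>a * d \<le> (b + d) * d\<close> nn by (smt (verit) mult_nonneg_nonneg)
    also have "\<dots> \<le> (c + d) * (b + d)" using nn by (simp add: algebra_simps)
    finally show ?thesis .
  qed
  hence "a - \<epsilon> * b \<le> c + d" using bd by (simp add: mult_le_cancel_right)
  moreover have "a - \<epsilon> * b \<le> a + b" using epos nn by (smt (verit) mult_nonneg_nonneg)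
  ultimately show ?thesis using Om vS vSc by simp
qed

lemma cond_le_HLC:
  assumes H: "hypergraph V E w" and RV: "R \<subseteq> V" and SV: "S \<subseteq> V"
    and Rpos: "0 < hvol E w R" and Rle: "hvol E w R \<le> hvol E w (V - R)"
    and eps_lo: "hvol E w R / hvol E w (V - R) \<le> \<epsilon>"
    and Op: "0 < Omega V E w R \<epsilon> S"
  shows "hcond V E w S \<le> hcut E w S / Omega V E w R \<epsilon> S"
  unfolding hcond_def
  using Omega_le_min[OF H RV SV Rpos Rle eps_lo] Op hcut_nonneg[OF H]
  by (intro divide_left_mono) (auto simp: mult_pos_pos)

lemma Sstar_bound:
  assumes H: "hypergraph V E w" and RV: "R \<subseteq> V" and SV: "Sstar \<subseteq> V"
    and Rpos: "0 < hvol E w R" and Rle: "hvol E w R \<le> hvol E w (V - R)"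
    and eps_lo: "hvol E w R / hvol E w (V - R) \<le> \<epsilon>"
    and Smin: "\<forall>S. S \<subseteq> V \<longrightarrow> HLC V E w R \<epsilon> Sstar \<le> HLC V E w R \<epsilon> S"
    and TV: "T \<subseteq> V" and OT: "0 < Omega V E w R \<epsilon> T"
  shows "hcond V E w Sstar \<le> hcut E w T / Omega V E w R \<epsilon> T"
proof -
  have le: "HLC V E w R \<epsilon> Sstar \<le> ereal (hcut E w T / Omega V E w R \<epsilon> T)"
  proof -
    have "HLC V E w R \<epsilon> Sstar \<le> HLC V E w R \<epsilon> T" using Smin TV by blast
    also have "HLC V E w R \<epsilon> T = ereal (hcut E w T / Omega V E w R \<epsilon> T)"
      using OT by (simp add: HLC_def)
    finally show ?thesis .
  qed
  have OS: "0 < Omega V E w R \<epsilon> Sstar"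
  proof (rule ccontr)
    assume "\<not> ?thesis" thus False using le unfolding HLC_def by simp
  qed
  hence "hcut E w Sstar / Omega V E w R \<epsilon> Sstar \<le> hcut E w T / Omega V E w R \<epsilon> T"
    using le unfolding HLC_def by simp
  thus ?thesis using cond_le_HLC[OF H RV SV Rpos Rle eps_lo OS] by linarith
qed


lemma alg2:
  fixes x vT vR vRc eps g :: real
  assumes vT: "0 < vT" and x0: "0 \<le> x" and vR: "0 < vR" and vRc: "0 < vRc"
    and e0: "vR / vRc \<le> eps"
    and hyp: "x / vT \<ge> vR / (vR + vRc) + g * (vRc / (vR + vRc))"
  shows "(g - (eps - vR / vRc)) * vT \<le> x - eps * (vT - x)"
proof -
  define a where "a = x / vT"
  define e0 where "e0 = vR / vRc"
  have xa: "x = a * vT" unfolding a_def using vT by simp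
  have a0: "0 \<le> a" unfolding a_def using x0 vT by simp
  have s: "0 < vR + vRc" using vR vRc by simp
  have "vR / (vR + vRc) + g * (vRc / (vR + vRc)) = (vR + g * vRc) / (vR + vRc)"
    by (simp add: add_divide_distrib)
  hence "a \<ge> (vR + g * vRc) / (vR + vRc)" using hyp unfolding a_def by simp
  hence "a * (vR + vRc) \<ge> vR + g * vRc" using s by (simp add: pos_divide_le_eq)
  moreover have "vR = e0 * vRc" unfolding e0_def using vRc by simp
  ultimately have "a * (e0 * vRc + vRc) \<ge> e0 * vRc + g * vRc" by simp
  hence "(a * (e0 + 1)) * vRc \<ge> (e0 + g) * vRc" by (simp add: algebra_simps)
  hence h1: "a * (e0 + 1) \<ge> e0 + g" using vRc by simp
  have "a * e0 \<le> a * eps" using e0 a0 unfolding e0_def by (rule mult_left_mono)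
  hence "(1 + eps) * a - eps \<ge> g - (eps - e0)" using h1 by (simp add: algebra_simps)
  hence "((1 + eps) * a - eps) * vT \<ge> (g - (eps - e0)) * vT" using vT by simp
  thus ?thesis unfolding xa e0_def by (simp add: algebra_simps)
qed

theorem theorem4:
  fixes V :: "'a set" and E :: "'a set set" and w :: "'a set \<Rightarrow> 'a set \<Rightarrow> real"
    and R Sstar :: "'a set" and \<epsilon> :: real
  assumes H: "hypergraph V E w"
    and RV: "R \<subseteq> V"
    and Rpos: "0 < hvol E w R"
    and Rle: "hvol E w R \<le> hvol E w (V - R)"
    and eps_lo: "hvol E w R / hvol E w (V - R) \<le> \<epsilon>"
    and eps_hi: "\<epsilon> < hvol E w R / hvol E w (V - R) + 1"
    and SV: "Sstar \<subseteq> V"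
    and Smin: "\<forall>S. S \<subseteq> V \<longrightarrow> HLC V E w R \<epsilon> Sstar \<le> HLC V E w R \<epsilon> S"
  shows "(\<forall>T. T \<subseteq> R \<and> 0 < hvol E w T \<longrightarrow> hcond V E w Sstar \<le> hcond V E w T)
    \<and> (\<forall>T \<gamma>. T \<subseteq> V \<and> 0 < hvol E w T \<and> hvol E w T \<le> hvol E w (V - T)
          \<and> \<epsilon> - hvol E w R / hvol E w (V - R) < \<gamma> \<and> \<gamma> < 1
          \<and> hvol E w (T \<inter> R) / hvol E w T \<ge>
              hvol E w R / hvol E w V + \<gamma> * (hvol E w (V - R) / hvol E w V)
        \<longrightarrow> hcond V E w Sstar \<le> (1 / (\<gamma> - (\<epsilon> - hvol E w R / hvol E w (V - R)))) * hcond V E w T)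
    \<and> (\<epsilon> = hvol E w R / hvol E w (V - R) \<longrightarrow>
        (\<forall>T \<gamma>. T \<subseteq> V \<and> 0 < hvol E w T \<and> hvol E w T \<le> hvol E w (V - T)
          \<and> 0 < \<gamma> \<and> \<gamma> < 1
          \<and> hvol E w (T \<inter> R) / hvol E w T \<ge>
              hvol E w R / hvol E w V + \<gamma> * (hvol E w (V - R) / hvol E w V)
        \<longrightarrow> hcond V E w Sstar \<le> (1 / \<gamma>) * hcond V E w T))"
  proof -
  have fV: "finite V" using H by (simp add: hypergraph_def)
  have vRc0: "0 < hvol E w (V - R)" using Rpos Rle by linarith
  have e0: "0 \<le> hvol E w R / hvol E w (V - R)" using Rpos vRc0 by simp
  have P2: "\<forall>T \<gamma>. T \<subseteq> V \<and> 0 < hvol E w T \<and> hvol E w T \<le> hvol E w (V - T)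
          \<and> \<epsilon> - hvol E w R / hvol E w (V - R) < \<gamma> \<and> \<gamma> < 1
          \<and> hvol E w (T \<inter> R) / hvol E w T \<ge>
              hvol E w R / hvol E w V + \<gamma> * (hvol E w (V - R) / hvol E w V)
        \<longrightarrow> hcond V E w Sstar \<le> (1 / (\<gamma> - (\<epsilon> - hvol E w R / hvol E w (V - R)))) * hcond V E w T"
  proof (intro allI impI)
    fix T \<gamma> assume A: "T \<subseteq> V \<and> 0 < hvol E w T \<and> hvol E w T \<le> hvol E w (V - T)
          \<and> \<epsilon> - hvol E w R / hvol E w (V - R) < \<gamma> \<and> \<gamma> < 1
          \<and> hvol E w (T \<inter> R) / hvol E w T \<ge>
              hvol E w R / hvol E w V + \<gamma> * (hvol E w (V - R) / hvol E w V)"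
    define c where "c = \<gamma> - (\<epsilon> - hvol E w R / hvol E w (V - R))"
    have c0: "0 < c" using A unfolding c_def by linarith
    have TV: "T \<subseteq> V" and vT: "0 < hvol E w T" using A by auto
    have fT: "finite T" using fV TV finite_subset by blast
    have vV: "hvol E w V = hvol E w R + hvol E w (V - R)"
    proof -
      have "V \<inter> R = R" using RV by blast
      thus ?thesis using hvol_split[OF fV, of E w R] by simp
    qed
    have sT: "hvol E w (T - R) = hvol E w T - hvol E w (T \<inter> R)"
      using hvol_split[OF fT, of E w R] by simp
    have TR: "T \<inter> (V - R) = T - R" using TV by auto
    have Om: "Omega V E w R \<epsilon> T = hvol E w (T \<inter> R) - \<epsilon> * (hvol E w T - hvol E w (T \<inter> R))"
      unfolding Omega_def TR sT ..
    have h0: "hvol E w (T \<inter> R) / hvol E w T \<ge>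
              hvol E w R / hvol E w V + \<gamma> * (hvol E w (V - R) / hvol E w V)" using A by blast
    hence hyp: "hvol E w (T \<inter> R) / hvol E w T \<ge>
              hvol E w R / (hvol E w R + hvol E w (V - R)) + \<gamma> * (hvol E w (V - R) / (hvol E w R + hvol E w (V - R)))"
      unfolding vV .
    note key0 = alg2[OF vT hvol_nonneg[OF H] Rpos vRc0 eps_lo hyp]
    have key: "c * hvol E w T \<le> Omega V E w R \<epsilon> T"
      unfolding Om c_def by (rule key0)
    have "0 < c * hvol E w T" using c0 vT by simp
    hence OT: "0 < Omega V E w R \<epsilon> T" using key by linarith
    have "hcond V E w Sstar \<le> hcut E w T / Omega V E w R \<epsilon> T"
      by (rule Sstar_bound[OF H RV SV Rpos Rle eps_lo Smin TV OT])
    also have "\<dots> \<le> hcut E w T / (c * hvol E w T)"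
    proof (rule divide_left_mono)
      show "c * hvol E w T \<le> Omega V E w R \<epsilon> T" by (rule key)
      show "0 \<le> hcut E w T" by (rule hcut_nonneg[OF H])
      show "0 < Omega V E w R \<epsilon> T * (c * hvol E w T)"
        using OT \<open>0 < c * hvol E w T\<close> by (rule mult_pos_pos)
    qed
    also have "\<dots> = (1 / c) * hcond V E w T"
    proof -
      have "min (hvol E w T) (hvol E w (V - T)) = hvol E w T" using A by linarith
      thus ?thesis unfolding hcond_def using c0 vT by simp
    qed
    finally show "hcond V E w Sstar \<le> (1 / (\<gamma> - (\<epsilon> - hvol E w R / hvol E w (V - R)))) * hcond V E w T"
      unfolding c_def .
  qed
  have P1: "\<forall>T. T \<subseteq> R \<and> 0 < hvol E w T \<longrightarrow> hcond V E w Sstar \<le> hcond V E w T"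
  proof (intro allI impI)
    fix T assume A: "T \<subseteq> R \<and> 0 < hvol E w T"
    have TV: "T \<subseteq> V" using A RV by auto
    have "T \<inter> (V - R) = {}" using A by auto
    hence Om: "Omega V E w R \<epsilon> T = hvol E w T"
      unfolding Omega_def using A by (simp add: hvol_def Int_absorb2)
    have OT: "0 < Omega V E w R \<epsilon> T" using Om A by simp
    have "hvol E w T \<le> hvol E w R" using hvol_mono[OF H _ finite_subset[OF RV fV]] A by blast
    moreover have "hvol E w (V - R) \<le> hvol E w (V - T)"
      using hvol_mono[OF H _ finite_Diff[OF fV]] A by blast
    ultimately have m: "min (hvol E w T) (hvol E w (V - T)) = hvol E w T" using Rle by simp
    have "hcond V E w Sstar \<le> hcut E w T / Omega V E w R \<epsilon> T"
      by (rule Sstar_bound[OF H RV SV Rpos Rle eps_lo Smin TV OT])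
    thus "hcond V E w Sstar \<le> hcond V E w T" unfolding hcond_def m Om .
  qed
  have P3: "\<epsilon> = hvol E w R / hvol E w (V - R) \<longrightarrow>
        (\<forall>T \<gamma>. T \<subseteq> V \<and> 0 < hvol E w T \<and> hvol E w T \<le> hvol E w (V - T)
          \<and> 0 < \<gamma> \<and> \<gamma> < 1
          \<and> hvol E w (T \<inter> R) / hvol E w T \<ge>
              hvol E w R / hvol E w V + \<gamma> * (hvol E w (V - R) / hvol E w V)
        \<longrightarrow> hcond V E w Sstar \<le> (1 / \<gamma>) * hcond V E w T)"
  proof (intro impI allI)
    fix T \<gamma> assume e: "\<epsilon> = hvol E w R / hvol E w (V - R)"
      and A: "T \<subseteq> V \<and> 0 < hvol E w T \<and> hvol E w T \<le> hvol E w (V - T)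
          \<and> 0 < \<gamma> \<and> \<gamma> < 1
          \<and> hvol E w (T \<inter> R) / hvol E w T \<ge>
              hvol E w R / hvol E w V + \<gamma> * (hvol E w (V - R) / hvol E w V)"
    show "hcond V E w Sstar \<le> (1 / \<gamma>) * hcond V E w T"
    proof -
      have "\<epsilon> - hvol E w R / hvol E w (V - R) = 0" using e by simp
      thus ?thesis using P2[rule_format, of T \<gamma>] A by auto
    qed
  qed
  from P1 P2 P3 show ?thesis by (intro conjI)
qed

end
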